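(* Let $a,b,c,d$ be integers with $a\neq 0$, $c\neq 0$, $\gcd(a,b)=1$, $\gcd(c,d)=1$, and let $k\ge 2$ be an integer. Then there are no rational numbers $A,B$ such that the polynomial identity $$S_{a,b}^k(Ax^2+B)=S_{c,d}^{2k+1}\!\left(x-\frac{d}{c}+\frac12\right)$$ holds in $\mathbb{Q}[x]$.
   Context: The Bernoulli polynomials $B_n(x)$ are defined by $\frac{t e^{tx}}{e^t-1}=\sum_{n\ge 0}B_n(x)\frac{t^n}{n!}$. For integers $a\neq 0$, $b$ with $\gcd(a,b)=1$ and an integer $k\ge 1$, define the polynomial $$S_{a,b}^k(x):=\frac{a^k}{k+1}\left(B_{k+1}\!\left(x+\frac{b}{a}\right)-B_{k+1}\!\left(\frac{b}{a}\right)\right)\in\mathbb{Q}[x].$$ *)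

theory Defs
  imports "HOL-Computational_Algebra.Polynomial"
begin

text \<open>Bernoulli numbers (convention B_1 = -1/2, matching t/(e^t - 1)), via the
  standard recursion  sum_{j<=n} (n+1 choose j) B_j = 0  for n >= 1, B_0 = 1.\<close>
fun bernoulli_num :: "nat \<Rightarrow> rat" where
  "bernoulli_num n =
     (if n = 0 then 1
      else - (\<Sum>j<n. of_nat ((n + 1) choose j) * (if j < n then bernoulli_num j else 0))
             / of_nat (n + 1))"

definition bernoulli_poly :: "nat \<Rightarrow> rat poly" where
  "bernoulli_poly n = (\<Sum>j\<le>n. monom (of_nat (n choose j) * bernoulli_num j) (n - j))"

definition S_poly :: "int \<Rightarrow> int \<Rightarrow> nat \<Rightarrow> rat poly" where
  "S_poly a b k =
     (let r = of_int b / of_int a :: rat in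
      smult (of_int a ^ k / of_nat (k + 1))
        (pcompose (bernoulli_poly (k + 1)) [:r, 1:]
         - [:poly (bernoulli_poly (k + 1)) r:]))"

end

theory Submission imports Defs "HOL-Computational_Algebra.Primes" begin
lemma bn: "bernoulli_num 0 = 1" "bernoulli_num 1 = -1/2" "bernoulli_num 2 = 1/6"
  "bernoulli_num 3 = 0" "bernoulli_num 4 = -1/30"
  by (simp_all add: bernoulli_num.simps[of 1] bernoulli_num.simps[of 2] bernoulli_num.simps[of 3]
   bernoulli_num.simps[of 4] numeral_eq_Suc lessThan_Suc) 

lemma poly_bern_small:
  "poly (bernoulli_poly 0) x = 1"
  "poly (bernoulli_poly 1) x = x - 1/2"
  "poly (bernoulli_poly 2) x = x^2 - x + 1/6"
  "poly (bernoulli_poly 4) x = x^4 - 2*x^3 + x^2 - 1/30"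
  by (simp_all add: bernoulli_poly_def poly_sum poly_monom bn numeral_eq_Suc atMost_Suc
        binomial_eq_0 algebra_simps power2_eq_square)

lemma bern_half: "poly (bernoulli_poly 2) (1/2) = -1/12" "poly (bernoulli_poly 4) (1/2) = 7/240"
  by (simp_all add: poly_bern_small power2_eq_square power4_eq_xxxx power3_eq_cube)

lemma coeff_lin_pow: "coeff ([:h,1:]^i) m = of_nat (i choose m) * h^(i-m)"
  for h :: "'a::comm_ring_1"
proof -
  have e: "[:h,1:] = monom 1 1 + [:h:]"
    by (simp add: poly_eq_iff coeff_pCons coeff_monom split: nat.split)
  have "[:h,1:]^i = (\<Sum>k\<le>i. of_nat (i choose k) * monom 1 1 ^ k * [:h:]^(i-k))"
    unfolding e by (rule binomial_ring)
  also have "\<dots> = (\<Sum>k\<le>i. monom (of_nat (i choose k) * h^(i-k)) k)"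
    by (intro sum.cong refl) (simp add: monom_power poly_const_pow of_nat_poly mult_monom flip: monom_0)
  finally show ?thesis
    by (simp add: coeff_sum coeff_monom binomial_eq_0)
qed

lemma pcompose_monom_gen: "pcompose (monom c i) q = smult c (q^i)"
  by (induction i) (simp_all add: monom_Suc pcompose_pCons monom_0 algebra_simps)

lemma coeff_sq: "coeff (pcompose p [:0,0,A:]) (2*m) = A^m * coeff p m"
  for A :: "'a::comm_ring_1"
proof (induction p arbitrary: m)
  case 0 then show ?case by simp
next
  case (pCons a p)
  show ?case
  proof (cases m)
    case 0 then show ?thesis by (simp add: pcompose_pCons)
  next
    case (Suc m')
    have "2*m = Suc (Suc (2*m'))" using Suc by simp
    then show ?thesis using pCons(2)[of m'] Suc by (simp add: pcompose_pCons coeff_pCons)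
  qed
qed

lemma choose_swap: assumes "j \<le> n - m" "m \<le> n"
  shows "(n choose j) * ((n-j) choose m) = (n choose m) * ((n-m) choose j)"
proof -
  have "(n choose (n-j)) * ((n-j) choose m) = (n choose m) * ((n-m) choose (n-j-m))"
    using choose_mult[of m "n-j" n] assms by (simp add: diff_commute)
  moreover have "n choose (n-j) = n choose j" using assms by (simp add: binomial_symmetric[symmetric])
  moreover have "(n-m) choose (n-j-m) = (n-m) choose j" using assms
    by (metis binomial_symmetric diff_commute diff_diff_cancel)
  ultimately show ?thesis by simp
qed

lemma coeff_bern_shift: assumes "m \<le> n"
  shows "coeff (pcompose (bernoulli_poly n) [:h,1:]) m
       = of_nat (n choose m) * poly (bernoulli_poly (n-m)) h"
proof -
  have "coeff (pcompose (bernoulli_poly n) [:h,1:]) m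
     = (\<Sum>j\<le>n. of_nat (n choose j) * bernoulli_num j * (of_nat ((n-j) choose m) * h^(n-j-m)))"
    by (simp add: bernoulli_poly_def pcompose_sum pcompose_monom_gen coeff_sum coeff_lin_pow)
  also have "\<dots> = (\<Sum>j\<le>n-m. of_nat (n choose j) * bernoulli_num j * (of_nat ((n-j) choose m) * h^(n-j-m)))"
    by (rule sum.mono_neutral_right) (auto simp: binomial_eq_0)
  also have "\<dots> = (\<Sum>j\<le>n-m. of_nat (n choose m) * (of_nat ((n-m) choose j) * bernoulli_num j * h^(n-m-j)))"
  proof (intro sum.cong refl)
    fix j assume "j \<in> {..n-m}"
    then have "j \<le> n - m" by simp
    then have "of_nat (n choose j) * (of_nat ((n-j) choose m) :: rat) = of_nat (n choose m) * of_nat ((n-m) choose j)"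
      using choose_swap[of j n m] assms by (metis of_nat_mult)
    moreover have "n - j - m = n - m - j" by simp
    ultimately show "of_nat (n choose j) * bernoulli_num j * (of_nat ((n-j) choose m) * h^(n-j-m))
       = of_nat (n choose m) * (of_nat ((n-m) choose j) * bernoulli_num j * h^(n-m-j))"
      by (metis (no_types, lifting) mult.assoc mult.commute)
  qed
  also have "\<dots> = of_nat (n choose m) * poly (bernoulli_poly (n-m)) h"
    by (simp add: bernoulli_poly_def poly_sum poly_monom sum_distrib_left)
  finally show ?thesis .
qed

lemma ch2: "(of_nat (n choose 2)::rat) = of_nat n * (of_nat n - 1) / 2"
proof (cases n)
  case 0 then show ?thesis by simp
next
  case (Suc m)
  have "Suc 1 * (Suc m choose Suc 1) = Suc m * (m choose 1)" by (rule Suc_times_binomial)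
  then have "2 * (n choose 2) = n * m" using Suc by (simp add: numeral_2_eq_2)
  then have "(2::rat) * of_nat (n choose 2) = of_nat n * of_nat m" by (metis of_nat_mult of_nat_numeral)
  then show ?thesis using Suc by (simp add: field_simps)
qed

lemma ch4: assumes "n \<ge> 4"
  shows "(of_nat (n choose 4)::rat) = of_nat n * (of_nat n - 1) * (of_nat n - 2) * (of_nat n - 3) / 24"
proof -
  define q where "q = n - 4"
  have n: "n = Suc (Suc (Suc (Suc q)))" using assms unfolding q_def by arith
  have a: "4 * (Suc (Suc (Suc (Suc q))) choose 4) = Suc (Suc (Suc (Suc q))) * (Suc (Suc (Suc q)) choose 3)"
    using Suc_times_binomial[of 3 "Suc (Suc (Suc q))"] by (simp add: numeral_eq_Suc)
  have b: "3 * (Suc (Suc (Suc q)) choose 3) = Suc (Suc (Suc q)) * (Suc (Suc q) choose 2)"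
    using Suc_times_binomial[of 2 "Suc (Suc q)"] by (simp add: numeral_eq_Suc)
  have c: "2 * (Suc (Suc q) choose 2) = Suc (Suc q) * Suc q"
    using Suc_times_binomial[of 1 "Suc q"] by (simp add: numeral_eq_Suc)
  have a': "(4::rat) * of_nat (n choose 4) = of_nat n * of_nat (Suc (Suc (Suc q)) choose 3)"
    using arg_cong[OF a, of "of_nat :: nat \<Rightarrow> rat"] unfolding n by (simp only: of_nat_mult of_nat_numeral)
  have b': "(3::rat) * of_nat (Suc (Suc (Suc q)) choose 3) = (of_nat n - 1) * of_nat (Suc (Suc q) choose 2)"
    using arg_cong[OF b, of "of_nat :: nat \<Rightarrow> rat"] unfolding n by (simp add: of_nat_mult algebra_simps)
  have c': "(2::rat) * of_nat (Suc (Suc q) choose 2) = (of_nat n - 2) * (of_nat n - 3)"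
    using arg_cong[OF c, of "of_nat :: nat \<Rightarrow> rat"] unfolding n by (simp add: of_nat_mult algebra_simps)
  have "of_nat (n choose 4) = of_nat n * of_nat (Suc (Suc (Suc q)) choose 3) / (4::rat)" using a' by simp
  also have "\<dots> = of_nat n * ((of_nat n - 1) * of_nat (Suc (Suc q) choose 2)) / 12" using b' by simp
  also have "\<dots> = of_nat n * ((of_nat n - 1) * ((of_nat n - 2) * (of_nat n - 3))) / 24" using c' by simp
  finally show ?thesis by (simp add: mult.assoc)
qed

lemma no_rat_sqrt3: "(A::rat)^2 \<noteq> 3"
proof
  assume h: "A^2 = 3"
  obtain p q where pq: "quotient_of A = (p,q)" by (cases "quotient_of A") auto
  have q0: "q > 0" using quotient_of_denom_pos[OF pq] .
  have cop: "coprime p q" using quotient_of_coprime[OF pq] .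
  have A: "A = of_int p / of_int q" using quotient_of_div[OF pq] .
  have "(of_int p :: rat)^2 = 3 * (of_int q)^2" using h q0 unfolding A by (simp add: field_simps power_divide)
  then have e: "p^2 = 3*q^2" by (metis of_int_eq_iff of_int_mult of_int_power of_int_numeral)
  have pr3: "prime (3::nat)" unfolding prime_nat_iff'
  proof (intro conjI ballI)
    fix n :: nat assume "n \<in> {2..<3}"
    then have "n = 2" by auto
    then show "\<not> n dvd 3" by simp
  qed simp
  have pr: "prime (3::int)" using pr3 by (simp add: prime_int_numeral_eq)
  have "3 dvd p^2" using e by simp
  then have "3 dvd p" using pr prime_dvd_power by blast
  then obtain m where m: "p = 3*m" by blast
  have "q^2 = 3*m^2" using e unfolding m by (simp add: power_mult_distrib)
  then have "3 dvd q^2" by simp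
  then have "3 dvd q" using pr prime_dvd_power by blast
  then have "3 dvd gcd p q" using \<open>3 dvd p\<close> by simp
  then show False using cop by simp
qed

lemma coeff_const_pos: "0 < i \<Longrightarrow> coeff [:x:] i = 0"
  by (cases i) auto

theorem mainTheorem7:
  fixes a b c d :: int and k :: nat
  assumes "a \<noteq> 0" and "c \<noteq> 0" and "gcd a b = 1" and "gcd c d = 1" and "k \<ge> 2"
  shows "\<not> (\<exists>A B :: rat.
            pcompose (S_poly a b k) [:B, 0, A:]
            = pcompose (S_poly c d (2 * k + 1))
                [:- (of_int d / of_int c) + 1 / 2, 1:])"
proof
  assume "\<exists>A B :: rat.
            pcompose (S_poly a b k) [:B, 0, A:]
            = pcompose (S_poly c d (2 * k + 1))
                [:- (of_int d / of_int c) + 1 / 2, 1:]"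
  then obtain A B :: rat where eq: "pcompose (S_poly a b k) [:B, 0, A:]
            = pcompose (S_poly c d (2 * k + 1))
                [:- (of_int d / of_int c) + 1 / 2, 1:]" by blast
  define r :: rat where "r = of_int b / of_int a"
  define s :: rat where "s = of_int d / of_int c"
  define \<alpha> :: rat where "\<alpha> = of_int a ^ k / of_nat (k+1)"
  define \<beta> :: rat where "\<beta> = of_int c ^ (2*k+1) / of_nat (2*k+1+1)"
  define h where "h = r + B"
  have i1: "pcompose [:r,1:] [:B,0,A:] = [:h,0,A:]" by (simp add: pcompose_pCons h_def)
  have i2: "pcompose [:h,1:] [:0,0,A:] = [:h,0,A:]" by (simp add: pcompose_pCons)
  have i3: "pcompose [:s,1:] [:1/2 - s,1:] = [:1/2,1:]" by (simp add: pcompose_pCons)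
  have L: "pcompose (S_poly a b k) [:B,0,A:] = smult \<alpha> (pcompose (pcompose (bernoulli_poly (k+1)) [:h,1:]) [:0,0,A:] - [:poly (bernoulli_poly (k+1)) r:])"
    unfolding S_poly_def Let_def r_def[symmetric] \<alpha>_def
    by (simp add: pcompose_smult pcompose_diff flip: pcompose_assoc add: i1 i2)
  have R: "pcompose (S_poly c d (2*k+1)) [:- (of_int d / of_int c) + 1 / 2, 1:] = smult \<beta> (pcompose (bernoulli_poly (2*k+1+1)) [:1/2,1:] - [:poly (bernoulli_poly (2*k+1+1)) s:])"
    unfolding S_poly_def Let_def s_def[symmetric] \<beta>_def
    by (simp add: pcompose_smult pcompose_diff flip: pcompose_assoc add: i3)
  have cL: "coeff (pcompose (S_poly a b k) [:B,0,A:]) (2*m) = \<alpha> * (A^m * (of_nat ((k+1) choose m) * poly (bernoulli_poly (k+1-m)) h))"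
    if "0 < m" "m \<le> k+1" for m
    using that unfolding L by (simp add: coeff_sq coeff_bern_shift coeff_const_pos)
  have cR: "coeff (pcompose (S_poly c d (2*k+1)) [:- (of_int d / of_int c) + 1 / 2, 1:]) (2*m) = \<beta> * (of_nat ((2*k+1+1) choose (2*m)) * poly (bernoulli_poly (2*k+1+1-2*m)) (1/2))"
    if "0 < m" "m \<le> k+1" for m
    using that unfolding R by (simp add: coeff_bern_shift coeff_const_pos)
  have E: "\<alpha> * (A^m * (of_nat ((k+1) choose m) * poly (bernoulli_poly (k+1-m)) h)) = \<beta> * (of_nat ((2*k+1+1) choose (2*m)) * poly (bernoulli_poly (2*k+1+1-2*m)) (1/2))"
    if "0 < m" "m \<le> k+1" for m
    using cL[OF that] cR[OF that] eq by simp
  obtain j where kj: "k = j + 2" using assms(5) by (metis add.commute le_Suc_ex)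
  define K :: rat where "K = of_nat k"
  have E0: "\<alpha> * (A*(A*(A*A^j))) = \<beta>"
    using E[of "k+1"] by (simp add: kj poly_bern_small)
  have p1: "0 < k" "k \<le> k+1" "0 < k - 1" "k - 1 \<le> k+1" using kj by auto
  have e1: "k+1-k = 1" "2*k+1+1-2*k = 2" by simp_all
  have e2: "k+1-(k-1) = 2" "2*k+1+1-2*(k-1) = 4" using kj by simp_all
  have b1: "(of_nat ((k+1) choose k)::rat) = K+1" unfolding K_def by simp
  have b2: "(of_nat ((2*k+1+1) choose (2*k))::rat) = (2*K+2)*(2*K+1)/2"
  proof -
    have "(2*k+1+1) choose (2*k) = (2*k+1+1) choose 2"
      by (metis add_diff_cancel_left' binomial_symmetric le_add1 add.assoc one_add_one)
    then show ?thesis unfolding K_def by (simp add: ch2 field_simps)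
  qed
  have b3: "(of_nat ((k+1) choose (k-1))::rat) = (K+1)*K/2"
  proof -
    have "(k+1) choose (k-1) = (k+1) choose 2" using kj
      by (metis binomial_symmetric diff_le_self le_SucI add_2_eq_Suc' add.commute Suc_eq_plus1 diff_add_inverse diff_diff_cancel le_add2)
    then show ?thesis unfolding K_def by (simp add: ch2 field_simps)
  qed
  have b4: "(of_nat ((2*k+1+1) choose (2*(k-1)))::rat) = (2*K+2)*(2*K+1)*(2*K)*(2*K-1)/24"
  proof -
    have "(2*k+1+1) choose (2*(k-1)) = (2*k+1+1) choose 4" using kj
      by (metis binomial_symmetric diff_le_self e2(2) le_add1 le_trans diff_diff_cancel mult_le_mono2)
    moreover have "4 \<le> 2*k+1+1" using kj by simp
    ultimately show ?thesis unfolding K_def by (simp add: ch4 field_simps)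
  qed
  have E1: "\<alpha> * (A^k * ((K+1) * poly (bernoulli_poly 1) h)) = \<beta> * ((2*K+2)*(2*K+1)/2 * poly (bernoulli_poly 2) (1/2))"
    using E[of k, OF p1(1,2), unfolded e1 b1 b2] .
  have E2: "\<alpha> * (A^(k-1) * ((K+1)*K/2 * poly (bernoulli_poly 2) h)) = \<beta> * ((2*K+2)*(2*K+1)*(2*K)*(2*K-1)/24 * poly (bernoulli_poly 4) (1/2))"
    using E[of "k-1", OF p1(3,4), unfolded e2 b3 b4] .
  have K2: "K \<ge> 2" unfolding K_def using assms(5) by simp
  have an: "\<alpha> \<noteq> 0" unfolding \<alpha>_def using assms(1) by simp
  have bn0: "\<beta> \<noteq> 0" unfolding \<beta>_def using assms(2) by simp
  have A0: "A \<noteq> 0" using E0 bn0 by auto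
  define P where "P = \<alpha> * A^(j+1)"
  have P0: "P \<noteq> 0" unfolding P_def using an A0 by simp
  have kk: "k = j + 2" "k - 1 = j + 1" using kj by simp_all
  have F0: "\<beta> = P * A^2" using E0 unfolding P_def by (simp add: power2_eq_square algebra_simps)
  have F1: "P * (A * ((K+1) * (h - 1/2))) = P * (A * (A * ((2*K+2)*(2*K+1)/2 * (-1/12))))"
    using E1[unfolded bern_half, unfolded poly_bern_small] unfolding F0 P_def kk by (simp add: poly_bern_small power2_eq_square algebra_simps)
  have G1: "h - 1/2 = - A * (2*K+1)/12"
  proof -
    have "(P*A) * ((K+1) * (h - 1/2)) = (P*A) * (A * ((2*K+2)*(2*K+1)/2 * (-1/12)))" using F1 by (simp only: mult.assoc)
    then have "(K+1) * (h - 1/2) = A * ((2*K+2)*(2*K+1)/2 * (-1/12))" using P0 A0 by (metis mult_left_cancel no_zero_divisors)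
    then have "(K+1) * (h - 1/2) = (K+1) * (- A * (2*K+1)/12)" by (simp add: field_simps)
    moreover have "K + 1 \<noteq> 0" using K2 by simp
    ultimately show ?thesis by (metis mult_left_cancel)
  qed
  have F2: "P * ((K+1)*K/2 * (h^2 - h + 1/6)) = P * (A^2 * ((2*K+2)*(2*K+1)*(2*K)*(2*K-1)/24 * (7/240)))"
    using E2[unfolded bern_half, unfolded poly_bern_small] unfolding F0 P_def kk by (simp add: poly_bern_small power2_eq_square algebra_simps)
  have G2: "h^2 - h + 1/6 = A^2 * (2*K+1)*(2*K-1)*7/720"
  proof -
    have "(K+1)*K/2 * (h^2 - h + 1/6) = A^2 * ((2*K+2)*(2*K+1)*(2*K)*(2*K-1)/24 * (7/240))"
      using F2 P0 by (metis mult_left_cancel)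
    then have "((K+1)*K/2) * (h^2 - h + 1/6) = ((K+1)*K/2) * (A^2 * (2*K+1)*(2*K-1)*7/720)"
      by (simp add: field_simps)
    moreover have "(K+1)*K/2 \<noteq> 0" using K2 by simp
    ultimately show ?thesis by (metis mult_left_cancel)
  qed
  have hh: "h = 1/2 - A * (2*K+1)/12" using G1 by (simp add: field_simps)
  have G3: "A^2 * (2*K+1) * (3 - K) = 15"
    using G2 unfolding hh by (simp add: field_simps power2_eq_square)
  show False
  proof (cases "k = 2")
    case True
    then have "A^2 = 3" using G3 unfolding K_def by simp
    then show False using no_rat_sqrt3 by blast
  next
    case False
    then have "K \<ge> 3" unfolding K_def using assms(5) by simp
    moreover have "A^2 \<ge> 0" by simp
    ultimately have "A^2 * (2*K+1) * (3 - K) \<le> 0"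
      by (simp add: mult_nonneg_nonpos)
    then show False using G3 by simp
  qed
qed
end
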